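(* Let $B$ be a skew brace. Then a subset $P\subseteq B$ is an equivalence class of some congruence on $B$ if and only if $P$ is a paragon in $\mathrm{T}(B)$.
   Context: A skew brace is $(B,+,\cdot)$ with $(B,+)$ and $(B,\cdot)$ groups and $a(b+c)=ab-a+ac$. A congruence on $B$ is an equivalence relation compatible with both group operations. $\mathrm{T}(B)$ is $B$ with ternary operation $[a,b,c]=a-b+c$ and the multiplication of $B$. A normal sub-heap is a non-empty subset $S$ closed under $[-,-,-]$ with $[[a,e,s],a,e]\in S$ for all $a$ and $e,s\in S$; $a\sim_S b$ iff $[a,b,s]\in S$ for some (equivalently all) $s\in S$. A sub-heap $S$ is closed if $[ts',ts,s]\in S$ and $[s't,st,s]\in S$ for all $s,s'\in S$, $t$. A paragon is a non-empty normal sub-heap $P$ all of whose $\sim_P$-classes are closed sub-heaps. *)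

theory Defs
  imports "HOL-Algebra.Group"
begin

(* A skew brace: an additive group A (written multiplicatively in HOL-Algebra,
  so a + b is a \<otimes>_A b and -a is inv_A a) and a multiplicative
  group M on the same carrier, satisfying a(b+c) = ab - a + ac. *)

definition skew_brace :: "'a monoid \<Rightarrow> 'a monoid \<Rightarrow> bool" where
  "skew_brace A M \<longleftrightarrow> group A \<and> group M \<and> carrier M = carrier A \<and>
     (\<forall>a\<in>carrier A. \<forall>b\<in>carrier A. \<forall>c\<in>carrier A.
        a \<otimes>\<^bsub>M\<^esub> (b \<otimes>\<^bsub>A\<^esub> c)
          = (a \<otimes>\<^bsub>M\<^esub> b) \<otimes>\<^bsub>A\<^esub> inv\<^bsub>A\<^esub> a \<otimes>\<^bsub>A\<^esub> (a \<otimes>\<^bsub>M\<^esub> c))"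

definition brace_congruence :: "'a monoid \<Rightarrow> 'a monoid \<Rightarrow> 'a rel \<Rightarrow> bool" where
  "brace_congruence A M R \<longleftrightarrow> equiv (carrier A) R \<and>
     (\<forall>a b c d. (a, b) \<in> R \<longrightarrow> (c, d) \<in> R \<longrightarrow>
        (a \<otimes>\<^bsub>A\<^esub> c, b \<otimes>\<^bsub>A\<^esub> d) \<in> R \<and> (a \<otimes>\<^bsub>M\<^esub> c, b \<otimes>\<^bsub>M\<^esub> d) \<in> R)"

definition tern :: "'a monoid \<Rightarrow> 'a \<Rightarrow> 'a \<Rightarrow> 'a \<Rightarrow> 'a" where
  "tern A a b c = a \<otimes>\<^bsub>A\<^esub> inv\<^bsub>A\<^esub> b \<otimes>\<^bsub>A\<^esub> c"

definition sub_heap :: "'a monoid \<Rightarrow> 'a set \<Rightarrow> bool" where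
  "sub_heap A S \<longleftrightarrow> S \<subseteq> carrier A \<and>
     (\<forall>x\<in>S. \<forall>y\<in>S. \<forall>z\<in>S. tern A x y z \<in> S)"

definition normal_sub_heap :: "'a monoid \<Rightarrow> 'a set \<Rightarrow> bool" where
  "normal_sub_heap A S \<longleftrightarrow> S \<noteq> {} \<and> sub_heap A S \<and>
     (\<forall>a\<in>carrier A. \<forall>e\<in>S. \<forall>s\<in>S. tern A (tern A a e s) a e \<in> S)"

definition heap_rel :: "'a monoid \<Rightarrow> 'a set \<Rightarrow> 'a rel" where
  "heap_rel A S = {(a, b). a \<in> carrier A \<and> b \<in> carrier A \<and> (\<exists>s\<in>S. tern A a b s \<in> S)}"

definition closed_sub_heap :: "'a monoid \<Rightarrow> 'a monoid \<Rightarrow> 'a set \<Rightarrow> bool" where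
  "closed_sub_heap A M S \<longleftrightarrow> sub_heap A S \<and>
     (\<forall>s\<in>S. \<forall>s'\<in>S. \<forall>t\<in>carrier A.
        tern A (t \<otimes>\<^bsub>M\<^esub> s') (t \<otimes>\<^bsub>M\<^esub> s) s \<in> S \<and>
        tern A (s' \<otimes>\<^bsub>M\<^esub> t) (s \<otimes>\<^bsub>M\<^esub> t) s \<in> S)"

definition paragon :: "'a monoid \<Rightarrow> 'a monoid \<Rightarrow> 'a set \<Rightarrow> bool" where
  "paragon A M P \<longleftrightarrow> P \<noteq> {} \<and> normal_sub_heap A P \<and>
     (\<forall>C\<in>carrier A // heap_rel A P. closed_sub_heap A M C)"

end

theory Submission
  imports Defs
begin

lemma congA: "brace_congruence A M R \<Longrightarrow> (a,b) \<in> R \<Longrightarrow> (c,d) \<in> R \<Longrightarrow> (a \<otimes>\<^bsub>A\<^esub> c, b \<otimes>\<^bsub>A\<^esub> d) \<in> R"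
  unfolding brace_congruence_def by blast

lemma congM: "brace_congruence A M R \<Longrightarrow> (a,b) \<in> R \<Longrightarrow> (c,d) \<in> R \<Longrightarrow> (a \<otimes>\<^bsub>M\<^esub> c, b \<otimes>\<^bsub>M\<^esub> d) \<in> R"
  unfolding brace_congruence_def by blast

locale grp = group G for G :: "'a monoid"
begin

lemma tern_closed[simp]: "a \<in> carrier G \<Longrightarrow> b \<in> carrier G \<Longrightarrow> c \<in> carrier G \<Longrightarrow> tern G a b c \<in> carrier G"
  by (simp add: tern_def)

lemma tern_same1: "a \<in> carrier G \<Longrightarrow> e \<in> carrier G \<Longrightarrow> tern G a a e = e"
  by (simp add: tern_def)

lemma tern_same2: "a \<in> carrier G \<Longrightarrow> e \<in> carrier G \<Longrightarrow> tern G a e e = a"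
  by (simp add: tern_def m_assoc)

lemma tern_back: "a \<in> carrier G \<Longrightarrow> b \<in> carrier G \<Longrightarrow> s \<in> carrier G \<Longrightarrow> tern G (tern G a b s) s b = a"
  by (simp add: tern_def m_assoc)

lemma cong_inv:
  assumes R: "brace_congruence G M R" and ab: "(a,b) \<in> R"
  shows "(inv\<^bsub>G\<^esub> a, inv\<^bsub>G\<^esub> b) \<in> R"
proof -
  have eq: "equiv (carrier G) R" using R by (simp add: brace_congruence_def)
  have c: "a \<in> carrier G" "b \<in> carrier G" using ab eq by (auto simp: equiv_def refl_on_def)
  have 1: "(inv\<^bsub>G\<^esub> a, inv\<^bsub>G\<^esub> a) \<in> R" "(inv\<^bsub>G\<^esub> b, inv\<^bsub>G\<^esub> b) \<in> R" "(b, a) \<in> R"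
    using eq c ab by (auto simp: equiv_def refl_on_def sym_def)
  have "(inv\<^bsub>G\<^esub> a \<otimes>\<^bsub>G\<^esub> (b \<otimes>\<^bsub>G\<^esub> inv\<^bsub>G\<^esub> b), inv\<^bsub>G\<^esub> a \<otimes>\<^bsub>G\<^esub> (a \<otimes>\<^bsub>G\<^esub> inv\<^bsub>G\<^esub> b)) \<in> R"
    by (rule congA[OF R 1(1) congA[OF R 1(3) 1(2)]])
  then show ?thesis using c by (simp add: m_assoc[symmetric])
qed

lemma cong_tern:
  assumes R: "brace_congruence G M R" and "(x,x') \<in> R" "(y,y') \<in> R" "(z,z') \<in> R"
  shows "(tern G x y z, tern G x' y' z') \<in> R"
  unfolding tern_def by (rule congA[OF R congA[OF R assms(2) cong_inv[OF R assms(3)]] assms(4)])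

lemma lr[simp]: "x \<in> carrier G \<Longrightarrow> y \<in> carrier G \<Longrightarrow> x \<otimes>\<^bsub>G\<^esub> (inv\<^bsub>G\<^esub> x \<otimes>\<^bsub>G\<^esub> y) = y"
  by (simp add: m_assoc[symmetric])
lemma rl[simp]: "x \<in> carrier G \<Longrightarrow> y \<in> carrier G \<Longrightarrow> inv\<^bsub>G\<^esub> x \<otimes>\<^bsub>G\<^esub> (x \<otimes>\<^bsub>G\<^esub> y) = y"
  by (simp add: m_assoc[symmetric])

lemmas gs = m_assoc inv_mult_group tern_def

lemma E1: "x \<in> carrier G \<Longrightarrow> y \<in> carrier G \<Longrightarrow> p \<in> carrier G \<Longrightarrow> tern G (x \<otimes>\<^bsub>G\<^esub> p) p (y \<otimes>\<^bsub>G\<^esub> p) = (x \<otimes>\<^bsub>G\<^esub> y) \<otimes>\<^bsub>G\<^esub> p"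
  by (simp add: gs)
lemma E2: "x \<in> carrier G \<Longrightarrow> p \<in> carrier G \<Longrightarrow> tern G p (x \<otimes>\<^bsub>G\<^esub> p) p = inv\<^bsub>G\<^esub> x \<otimes>\<^bsub>G\<^esub> p"
  by (simp add: gs)
lemma E3: "x \<in> carrier G \<Longrightarrow> a \<in> carrier G \<Longrightarrow> p \<in> carrier G \<Longrightarrow>
   tern G (tern G (a \<otimes>\<^bsub>G\<^esub> p) p (x \<otimes>\<^bsub>G\<^esub> p)) (a \<otimes>\<^bsub>G\<^esub> p) p = (a \<otimes>\<^bsub>G\<^esub> x \<otimes>\<^bsub>G\<^esub> inv\<^bsub>G\<^esub> a) \<otimes>\<^bsub>G\<^esub> p"
  by (simp add: gs)
lemma E4: "s \<in> carrier G \<Longrightarrow> p \<in> carrier G \<Longrightarrow> (s \<otimes>\<^bsub>G\<^esub> inv\<^bsub>G\<^esub> p) \<otimes>\<^bsub>G\<^esub> p = s"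
  by (simp add: gs)
lemma E5: "a \<in> carrier G \<Longrightarrow> b \<in> carrier G \<Longrightarrow> s \<in> carrier G \<Longrightarrow> p \<in> carrier G \<Longrightarrow>
   (tern G a b s \<otimes>\<^bsub>G\<^esub> inv\<^bsub>G\<^esub> p) \<otimes>\<^bsub>G\<^esub> inv\<^bsub>G\<^esub> (s \<otimes>\<^bsub>G\<^esub> inv\<^bsub>G\<^esub> p) = a \<otimes>\<^bsub>G\<^esub> inv\<^bsub>G\<^esub> b"
  by (simp add: gs)
lemma E6: "a \<in> carrier G \<Longrightarrow> b \<in> carrier G \<Longrightarrow> p \<in> carrier G \<Longrightarrow> tern G a b p = (a \<otimes>\<^bsub>G\<^esub> inv\<^bsub>G\<^esub> b) \<otimes>\<^bsub>G\<^esub> p"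
  by (simp add: gs)
lemma E7: "a \<in> carrier G \<Longrightarrow> b \<in> carrier G \<Longrightarrow> inv\<^bsub>G\<^esub> (a \<otimes>\<^bsub>G\<^esub> inv\<^bsub>G\<^esub> b) = b \<otimes>\<^bsub>G\<^esub> inv\<^bsub>G\<^esub> a"
  by (simp add: gs)
lemma E8: "a \<in> carrier G \<Longrightarrow> b \<in> carrier G \<Longrightarrow> c \<in> carrier G \<Longrightarrow> (a \<otimes>\<^bsub>G\<^esub> inv\<^bsub>G\<^esub> b) \<otimes>\<^bsub>G\<^esub> (b \<otimes>\<^bsub>G\<^esub> inv\<^bsub>G\<^esub> c) = a \<otimes>\<^bsub>G\<^esub> inv\<^bsub>G\<^esub> c"
  by (simp add: gs)
lemma E9: "a \<in> carrier G \<Longrightarrow> b \<in> carrier G \<Longrightarrow> c \<in> carrier G \<Longrightarrow> d \<in> carrier G \<Longrightarrow>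
  (a \<otimes>\<^bsub>G\<^esub> c) \<otimes>\<^bsub>G\<^esub> inv\<^bsub>G\<^esub> (b \<otimes>\<^bsub>G\<^esub> d) = (a \<otimes>\<^bsub>G\<^esub> inv\<^bsub>G\<^esub> b) \<otimes>\<^bsub>G\<^esub> (b \<otimes>\<^bsub>G\<^esub> (c \<otimes>\<^bsub>G\<^esub> inv\<^bsub>G\<^esub> d) \<otimes>\<^bsub>G\<^esub> inv\<^bsub>G\<^esub> b)"
  by (simp add: gs)
lemma E10: "x \<in> carrier G \<Longrightarrow> y \<in> carrier G \<Longrightarrow> b \<in> carrier G \<Longrightarrow> tern G x y b \<otimes>\<^bsub>G\<^esub> inv\<^bsub>G\<^esub> b = x \<otimes>\<^bsub>G\<^esub> inv\<^bsub>G\<^esub> y"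
  by (simp add: gs)

end

lemma forward:
  assumes G: "group A" and R: "brace_congruence A M R" and P: "P \<in> carrier A // R"
  shows "paragon A M P"
proof -
  interpret A: grp A by (simp add: grp_def G)
  have eq: "equiv (carrier A) R" using R by (simp add: brace_congruence_def)
  have Rc: "\<And>x y. (x,y) \<in> R \<Longrightarrow> x \<in> carrier A \<and> y \<in> carrier A"
    using eq by (auto simp: equiv_def refl_on_def)
  have Rr: "\<And>x. x \<in> carrier A \<Longrightarrow> (x,x) \<in> R" using eq by (auto simp: equiv_def refl_on_def)
  have Rs: "\<And>x y. (x,y) \<in> R \<Longrightarrow> (y,x) \<in> R" using eq by (auto simp: equiv_def sym_def)
  have Rt: "\<And>x y z. (x,y) \<in> R \<Longrightarrow> (y,z) \<in> R \<Longrightarrow> (x,z) \<in> R" using eq by (auto simp: equiv_def trans_def)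
  have cls: "sub_heap A C \<and> (\<forall>x\<in>C. \<forall>y\<in>C. (x,y) \<in> R) \<and> (\<forall>x\<in>C. \<forall>y. (x,y) \<in> R \<longrightarrow> y \<in> C) \<and> C \<noteq> {}"
    if C: "C \<in> carrier A // R" for C
  proof -
    obtain c where c: "c \<in> carrier A" "C = R `` {c}" using C by (auto simp: quotient_def)
    have inC: "x \<in> C \<longleftrightarrow> (c,x) \<in> R" for x using c by auto
    have all: "\<forall>x\<in>C. \<forall>y\<in>C. (x,y) \<in> R" using inC Rs Rt by blast
    have clo: "\<forall>x\<in>C. \<forall>y. (x,y) \<in> R \<longrightarrow> y \<in> C" using inC Rt by blast
    have sub: "C \<subseteq> carrier A" using inC Rc by blast
    have cc: "c \<in> C" using c Rr by auto
    have tc: "tern A x y z \<in> C" if "x \<in> C" "y \<in> C" "z \<in> C" for x y z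
    proof -
      have "(tern A x y z, tern A c c c) \<in> R"
        using A.cong_tern[OF R] all that cc by blast
      then show ?thesis using inC Rs c A.tern_same1 by auto
    qed
    have "sub_heap A C" unfolding sub_heap_def using sub tc by blast
    then show ?thesis using all clo cc by blast
  qed
  note clsP = cls[OF P]
  have Psh: "sub_heap A P" and Pall: "\<And>x y. x \<in> P \<Longrightarrow> y \<in> P \<Longrightarrow> (x,y) \<in> R"
    and Pclo: "\<And>x y. x \<in> P \<Longrightarrow> (x,y) \<in> R \<Longrightarrow> y \<in> P" and Pne: "P \<noteq> {}"
    using clsP by blast+
  have Pc: "P \<subseteq> carrier A" using Psh by (simp add: sub_heap_def)
  obtain p where p: "p \<in> P" using Pne by blast
  have hr: "heap_rel A P = R"
  proof (rule subset_antisym; rule subsetI)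
    fix ab assume "ab \<in> heap_rel A P"
    then obtain a b s where ab: "ab = (a,b)" "a \<in> carrier A" "b \<in> carrier A" "s \<in> P" "tern A a b s \<in> P"
      by (auto simp: heap_rel_def)
    have s: "s \<in> carrier A" using ab Pc by blast
    have "(tern A (tern A a b s) s b, tern A s s b) \<in> R"
      using A.cong_tern[OF R Pall[OF ab(5) ab(4)] Rr[OF s] Rr[OF ab(3)]] .
    then show "ab \<in> R" using ab s A.tern_back A.tern_same1 by simp
  next
    fix ab assume ab: "ab \<in> R"
    then obtain a b where a: "ab = (a,b)" "(a,b) \<in> R" by (cases ab) auto
    have pc: "p \<in> carrier A" using p Pc by blast
    have "(tern A a b p, tern A b b p) \<in> R"
      using A.cong_tern[OF R a(2)] Rr Rc a pc by blast
    then have "(p, tern A a b p) \<in> R" using A.tern_same1 Rc a pc Rs by auto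
    then have "tern A a b p \<in> P" using Pclo p by blast
    then show "ab \<in> heap_rel A P" using a Rc p unfolding heap_rel_def by blast
  qed
  have norm: "tern A (tern A a e s) a e \<in> P" if "a \<in> carrier A" "e \<in> P" "s \<in> P" for a e s
  proof -
    have ec: "e \<in> carrier A" using that Pc by blast
    have se: "(s, e) \<in> R" using Pall that by blast
    have "(tern A (tern A a e s) a e, tern A (tern A a e e) a e) \<in> R"
      by (rule A.cong_tern[OF R A.cong_tern[OF R Rr[OF that(1)] Rr[OF ec] se] Rr[OF that(1)] Rr[OF ec]])
    moreover have "tern A (tern A a e e) a e = e" using A.tern_same2 A.tern_same1 that ec by simp
    ultimately have "(e, tern A (tern A a e s) a e) \<in> R" using Rs by simp
    then show ?thesis using Pclo that by blast
  qed
  have closed: "closed_sub_heap A M C" if C: "C \<in> carrier A // R" for C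
  proof -
    note cC = cls[OF C]
    have Csh: "sub_heap A C" and Call: "\<And>x y. x \<in> C \<Longrightarrow> y \<in> C \<Longrightarrow> (x,y) \<in> R"
      and Cclo: "\<And>x y. x \<in> C \<Longrightarrow> (x,y) \<in> R \<Longrightarrow> y \<in> C"
      using cC by blast+
    have "tern A (t \<otimes>\<^bsub>M\<^esub> s') (t \<otimes>\<^bsub>M\<^esub> s) s \<in> C \<and> tern A (s' \<otimes>\<^bsub>M\<^esub> t) (s \<otimes>\<^bsub>M\<^esub> t) s \<in> C"
      if "s \<in> C" "s' \<in> C" "t \<in> carrier A" for s s' t
    proof -
      have ss: "(s', s) \<in> R" "(s,s) \<in> R" "(t,t) \<in> R" using Call that Rr by blast+
      have m1: "(t \<otimes>\<^bsub>M\<^esub> s', t \<otimes>\<^bsub>M\<^esub> s) \<in> R" "(s' \<otimes>\<^bsub>M\<^esub> t, s \<otimes>\<^bsub>M\<^esub> t) \<in> R"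
        using congM[OF R ss(3) ss(1)] congM[OF R ss(1) ss(3)] by auto
      have m2: "(t \<otimes>\<^bsub>M\<^esub> s, t \<otimes>\<^bsub>M\<^esub> s) \<in> R" "(s \<otimes>\<^bsub>M\<^esub> t, s \<otimes>\<^bsub>M\<^esub> t) \<in> R"
        using m1 Rc Rr by blast+
      have "(tern A (t \<otimes>\<^bsub>M\<^esub> s') (t \<otimes>\<^bsub>M\<^esub> s) s, tern A (t \<otimes>\<^bsub>M\<^esub> s) (t \<otimes>\<^bsub>M\<^esub> s) s) \<in> R"
           "(tern A (s' \<otimes>\<^bsub>M\<^esub> t) (s \<otimes>\<^bsub>M\<^esub> t) s, tern A (s \<otimes>\<^bsub>M\<^esub> t) (s \<otimes>\<^bsub>M\<^esub> t) s) \<in> R"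
        using A.cong_tern[OF R m1(1) m2(1) ss(2)] A.cong_tern[OF R m1(2) m2(2) ss(2)] by auto
      moreover have "tern A (t \<otimes>\<^bsub>M\<^esub> s) (t \<otimes>\<^bsub>M\<^esub> s) s = s" "tern A (s \<otimes>\<^bsub>M\<^esub> t) (s \<otimes>\<^bsub>M\<^esub> t) s = s"
        using A.tern_same1 m2 Rc ss by blast+
      ultimately show ?thesis using Cclo that Rs by metis
    qed
    then show ?thesis using Csh unfolding closed_sub_heap_def by blast
  qed
  show ?thesis unfolding paragon_def normal_sub_heap_def hr
    using Pne Psh norm closed by blast
qed


lemma backward:
  assumes G: "group A" and GM: "group M" and cM: "carrier M = carrier A" and P: "paragon A M P"
  shows "\<exists>R. brace_congruence A M R \<and> P \<in> carrier A // R"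
proof -
  interpret A: grp A by (simp add: grp_def G)
  interpret M: group M by (rule GM)
  have Pne: "P \<noteq> {}" and Psh: "sub_heap A P"
    and Pn: "\<And>a e s. a \<in> carrier A \<Longrightarrow> e \<in> P \<Longrightarrow> s \<in> P \<Longrightarrow> tern A (tern A a e s) a e \<in> P"
    and Pcl: "\<And>C. C \<in> carrier A // heap_rel A P \<Longrightarrow> closed_sub_heap A M C"
    using P unfolding paragon_def normal_sub_heap_def by blast+
  have Pc: "P \<subseteq> carrier A" and Pt: "\<And>x y z. x \<in> P \<Longrightarrow> y \<in> P \<Longrightarrow> z \<in> P \<Longrightarrow> tern A x y z \<in> P"
    using Psh unfolding sub_heap_def by blast+
  obtain p where p: "p \<in> P" using Pne by blast
  have pc: "p \<in> carrier A" using p Pc by blast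
  define Q where "Q x \<longleftrightarrow> x \<in> carrier A \<and> x \<otimes>\<^bsub>A\<^esub> p \<in> P" for x
  have Q1: "Q \<one>\<^bsub>A\<^esub>" using p pc by (simp add: Q_def)
  have Q2: "Q (x \<otimes>\<^bsub>A\<^esub> y)" if "Q x" "Q y" for x y
    using Pt[OF _ p, of "x \<otimes>\<^bsub>A\<^esub> p" "y \<otimes>\<^bsub>A\<^esub> p"] that A.E1[of x y p] pc by (simp add: Q_def)
  have Q3: "Q (inv\<^bsub>A\<^esub> x)" if "Q x" for x
    using Pt[OF p _ p, of "x \<otimes>\<^bsub>A\<^esub> p"] that A.E2[of x p] pc by (simp add: Q_def)
  have Q4: "Q (a \<otimes>\<^bsub>A\<^esub> x \<otimes>\<^bsub>A\<^esub> inv\<^bsub>A\<^esub> a)" if "Q x" "a \<in> carrier A" for x a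
    using Pn[of "a \<otimes>\<^bsub>A\<^esub> p" p "x \<otimes>\<^bsub>A\<^esub> p"] p that A.E3[of x a p] pc by (simp add: Q_def)
  have QP: "s \<in> P \<longleftrightarrow> Q (s \<otimes>\<^bsub>A\<^esub> inv\<^bsub>A\<^esub> p)" if "s \<in> carrier A" for s
    using that pc A.E4[of s p] by (simp add: Q_def)
  define R where "R = heap_rel A P"
  have HR: "(a,b) \<in> R \<longleftrightarrow> a \<in> carrier A \<and> b \<in> carrier A \<and> Q (a \<otimes>\<^bsub>A\<^esub> inv\<^bsub>A\<^esub> b)" for a b
  proof
    assume "(a,b) \<in> R"
    then obtain s where ab: "a \<in> carrier A" "b \<in> carrier A" "s \<in> P" "tern A a b s \<in> P"
      unfolding R_def heap_rel_def by blast
    have sc: "s \<in> carrier A" using ab Pc by blast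
    have "Q (s \<otimes>\<^bsub>A\<^esub> inv\<^bsub>A\<^esub> p)" "Q (tern A a b s \<otimes>\<^bsub>A\<^esub> inv\<^bsub>A\<^esub> p)"
      using QP ab sc by simp_all
    then have "Q ((tern A a b s \<otimes>\<^bsub>A\<^esub> inv\<^bsub>A\<^esub> p) \<otimes>\<^bsub>A\<^esub> inv\<^bsub>A\<^esub> (s \<otimes>\<^bsub>A\<^esub> inv\<^bsub>A\<^esub> p))"
      using Q2 Q3 by blast
    then show "a \<in> carrier A \<and> b \<in> carrier A \<and> Q (a \<otimes>\<^bsub>A\<^esub> inv\<^bsub>A\<^esub> b)"
      using A.E5[of a b s p] ab sc pc by simp
  next
    assume ab: "a \<in> carrier A \<and> b \<in> carrier A \<and> Q (a \<otimes>\<^bsub>A\<^esub> inv\<^bsub>A\<^esub> b)"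
    then have "tern A a b p \<in> P" using A.E6[of a b p] pc by (simp add: Q_def)
    then show "(a,b) \<in> R" using ab p unfolding R_def heap_rel_def by blast
  qed
  have Rs: "(b,a) \<in> R" if "(a,b) \<in> R" for a b
    using that Q3[of "a \<otimes>\<^bsub>A\<^esub> inv\<^bsub>A\<^esub> b"] A.E7[of a b] by (simp add: HR)
  have Rt: "(a,c) \<in> R" if "(a,b) \<in> R" "(b,c) \<in> R" for a b c
    using that Q2[of "a \<otimes>\<^bsub>A\<^esub> inv\<^bsub>A\<^esub> b" "b \<otimes>\<^bsub>A\<^esub> inv\<^bsub>A\<^esub> c"] A.E8[of a b c] by (simp add: HR)
  have Rr: "(a,a) \<in> R" if "a \<in> carrier A" for a
    using that Q1 by (simp add: HR)
  have eqv: "equiv (carrier A) R"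
  proof (rule equivI)
    show "refl_on (carrier A) R" unfolding refl_on_def using Rr HR by auto
    show "sym R" unfolding sym_def using Rs by blast
    show "trans R" unfolding trans_def using Rt by blast
    show "R \<subseteq> carrier A \<times> carrier A" using HR by auto
  qed
  have RA: "(a \<otimes>\<^bsub>A\<^esub> c, b \<otimes>\<^bsub>A\<^esub> d) \<in> R" if "(a,b) \<in> R" "(c,d) \<in> R" for a b c d
  proof -
    have c: "a \<in> carrier A" "b \<in> carrier A" "c \<in> carrier A" "d \<in> carrier A"
      and q: "Q (a \<otimes>\<^bsub>A\<^esub> inv\<^bsub>A\<^esub> b)" "Q (c \<otimes>\<^bsub>A\<^esub> inv\<^bsub>A\<^esub> d)"
      using that HR by blast+
    have "Q ((a \<otimes>\<^bsub>A\<^esub> inv\<^bsub>A\<^esub> b) \<otimes>\<^bsub>A\<^esub> (b \<otimes>\<^bsub>A\<^esub> (c \<otimes>\<^bsub>A\<^esub> inv\<^bsub>A\<^esub> d) \<otimes>\<^bsub>A\<^esub> inv\<^bsub>A\<^esub> b))"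
      using Q2 Q4 q c by blast
    then show ?thesis using c A.E9[of a b c d] by (simp add: HR)
  qed
  have RML: "(c \<otimes>\<^bsub>M\<^esub> a, c \<otimes>\<^bsub>M\<^esub> b) \<in> R \<and> (a \<otimes>\<^bsub>M\<^esub> c, b \<otimes>\<^bsub>M\<^esub> c) \<in> R"
    if ab: "(a,b) \<in> R" and c: "c \<in> carrier A" for a b c
  proof -
    have ac: "a \<in> carrier A" "b \<in> carrier A" using ab HR by blast+
    have C: "R `` {a} \<in> carrier A // heap_rel A P" using ac(1) unfolding R_def by (rule quotientI)
    have inC: "a \<in> R `` {a}" "b \<in> R `` {a}" using Rr ac ab by auto
    have cl: "tern A (c \<otimes>\<^bsub>M\<^esub> a) (c \<otimes>\<^bsub>M\<^esub> b) b \<in> R `` {a}" "tern A (a \<otimes>\<^bsub>M\<^esub> c) (b \<otimes>\<^bsub>M\<^esub> c) b \<in> R `` {a}"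
      using Pcl[OF C] inC c unfolding closed_sub_heap_def by blast+
    have mc: "c \<otimes>\<^bsub>M\<^esub> a \<in> carrier A" "c \<otimes>\<^bsub>M\<^esub> b \<in> carrier A" "a \<otimes>\<^bsub>M\<^esub> c \<in> carrier A" "b \<otimes>\<^bsub>M\<^esub> c \<in> carrier A"
      using ac c cM M.m_closed by auto
    have "(tern A (c \<otimes>\<^bsub>M\<^esub> a) (c \<otimes>\<^bsub>M\<^esub> b) b, b) \<in> R" "(tern A (a \<otimes>\<^bsub>M\<^esub> c) (b \<otimes>\<^bsub>M\<^esub> c) b, b) \<in> R"
      using cl ab Rs Rt by blast+
    then show ?thesis using A.E10 mc ac by (simp add: HR)
  qed
  have RM: "(a \<otimes>\<^bsub>M\<^esub> c, b \<otimes>\<^bsub>M\<^esub> d) \<in> R" if "(a,b) \<in> R" "(c,d) \<in> R" for a b c d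
  proof -
    have c: "b \<in> carrier A" "c \<in> carrier A" using that HR by blast+
    show ?thesis using RML[OF that(1) c(2)] RML[OF that(2) c(1)] Rt by blast
  qed
  have bc: "brace_congruence A M R" unfolding brace_congruence_def using eqv RA RM by blast
  have mem: "x \<in> P \<longleftrightarrow> x \<in> R `` {p}" for x
    proof (cases "x \<in> carrier A")
      case True
      have "Q (x \<otimes>\<^bsub>A\<^esub> inv\<^bsub>A\<^esub> p) \<longleftrightarrow> Q (p \<otimes>\<^bsub>A\<^esub> inv\<^bsub>A\<^esub> x)"
        using Q3[of "x \<otimes>\<^bsub>A\<^esub> inv\<^bsub>A\<^esub> p"] Q3[of "p \<otimes>\<^bsub>A\<^esub> inv\<^bsub>A\<^esub> x"] A.E7[of x p] A.E7[of p x] True pc by auto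
      then show ?thesis using QP[OF True] HR True pc by auto
    next
      case False
      then show ?thesis using Pc HR by auto
    qed
  have "P = R `` {p}" using mem by blast
  then have "P \<in> carrier A // R" using pc by (simp add: quotientI)
  then show ?thesis using bc by blast
qed

theorem corollary3p17:
  fixes A M :: "'a monoid" and P :: "'a set"
  assumes "skew_brace A M"
    and "P \<subseteq> carrier A"
  shows "(\<exists>R. brace_congruence A M R \<and> P \<in> carrier A // R) \<longleftrightarrow> paragon A M P"
proof
  have G: "group A" "group M" "carrier M = carrier A" using assms(1) unfolding skew_brace_def by blast+
  show "\<exists>R. brace_congruence A M R \<and> P \<in> carrier A // R \<Longrightarrow> paragon A M P"
    using forward[OF G(1)] by blast
  show "paragon A M P \<Longrightarrow> \<exists>R. brace_congruence A M R \<and> P \<in> carrier A // R"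
    using backward[OF G] by blast
qed

end
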